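(* Let $k\ge 2$ and $d\in\{2,\dots,k\}$. For any $\alpha\in(0,1)$, any $\mu>1/k$ and any $\epsilon\in(0,\mu k-1)$, the random bipartite graph with $n$ variable vertices and $m=\lfloor\mu n\log n\rfloor$ constraint vertices has no $\alpha$-small $d$-stopping set with probability $1-O(n^{1-\mu k+\epsilon})$ as $n\to\infty$.
   Context: Random bipartite graph: variable vertices $[n]$, constraint vertices $[m]$; for each $a\in[m]$ independently, a $k$-tuple of pairwise distinct elements of $[n]$ is chosen uniformly among all $n(n-1)\cdots(n-k+1)$ such tuples, and $\partial(a)\subseteq[n]$ denotes the set of its entries (the neighbours of $a$). $d$-stopping set: a set $V'\subseteq[n]$ such that $|\partial(a)\cap V'|\notin\{1,2,\dots,d-1\}$ for every $a\in[m]$. For $\alpha\in(0,1)$, an $\alpha$-small $d$-stopping set is a nonempty $d$-stopping set of size smaller than $\alpha n$. *)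

theory Defs
  imports "HOL-Probability.Probability" "HOL-Library.Landau_Symbols"
begin

text \<open>Variable vertices are 0..<n, constraint vertices 0..<m, tuple positions 0..<k.
  A k-tuple of pairwise distinct elements of [n] is an injective map {0..<k} -> {0..<n}.\<close>
definition tuples :: "nat \<Rightarrow> nat \<Rightarrow> (nat \<Rightarrow> nat) set" where
  "tuples n k = {t \<in> {0..<k} \<rightarrow>\<^sub>E {0..<n}. inj_on t {0..<k}}"

text \<open>Sample space: each constraint a gets a k-tuple; uniform distribution on this product
  set is the same as independent uniform choices for each a.\<close>
definition graphs :: "nat \<Rightarrow> nat \<Rightarrow> nat \<Rightarrow> (nat \<Rightarrow> nat \<Rightarrow> nat) set" where
  "graphs n m k = {0..<m} \<rightarrow>\<^sub>E tuples n k"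

definition random_graph :: "nat \<Rightarrow> nat \<Rightarrow> nat \<Rightarrow> (nat \<Rightarrow> nat \<Rightarrow> nat) pmf" where
  "random_graph n m k = pmf_of_set (graphs n m k)"

definition nbrs :: "(nat \<Rightarrow> nat \<Rightarrow> nat) \<Rightarrow> nat \<Rightarrow> nat \<Rightarrow> nat set" where
  "nbrs G k a = G a ` {0..<k}"

definition stopping_set :: "nat \<Rightarrow> nat \<Rightarrow> nat \<Rightarrow> nat \<Rightarrow> (nat \<Rightarrow> nat \<Rightarrow> nat) \<Rightarrow> nat set \<Rightarrow> bool" where
  "stopping_set n m k d G V \<longleftrightarrow> V \<subseteq> {0..<n} \<and>
     (\<forall>a<m. card (nbrs G k a \<inter> V) \<notin> {1..<d})"

definition small_stopping_set :: "nat \<Rightarrow> nat \<Rightarrow> nat \<Rightarrow> nat \<Rightarrow> real \<Rightarrow> (nat \<Rightarrow> nat \<Rightarrow> nat) \<Rightarrow> nat set \<Rightarrow> bool" where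
  "small_stopping_set n m k d \<alpha> G V \<longleftrightarrow>
     stopping_set n m k d G V \<and> V \<noteq> {} \<and> real (card V) < \<alpha> * real n"

end

theory Submission
  imports Defs "HOL-Real_Asymp.Real_Asymp"
begin

lemma tuples_finite: "finite (tuples n k)"
  unfolding tuples_def by (rule finite_subset[of _ "{0..<k} \<rightarrow>\<^sub>E {0..<n}"]) (auto intro: finite_PiE)

lemma tuples_card: "card (tuples n k) = (\<Prod>j\<in>{0..<k}. n - j)"
proof -
  have "tuples n k = {f \<in> {0..<k} \<rightarrow>\<^sub>E {0..<n}. inj_on f {0..<k}}" unfolding tuples_def by simp
  then show ?thesis using card_inj_on_subset_funcset[of "{0..<k}" "{0..<n}" "{0..<k}"] by simp
qed

lemma tuples_card_le: "card (tuples n k) \<le> n ^ k"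
proof -
  have "card (tuples n k) \<le> card ({0..<k} \<rightarrow>\<^sub>E {0..<n})"
    unfolding tuples_def by (rule card_mono) (auto intro: finite_PiE)
  then show ?thesis by (simp add: card_funcsetE)
qed

lemma tuples_card_pos: "k \<le> n \<Longrightarrow> card (tuples n k) > 0"
  unfolding tuples_card by (auto simp: prod_pos)

definition Bset :: "nat \<Rightarrow> nat \<Rightarrow> nat set \<Rightarrow> (nat \<Rightarrow> nat) set" where
  "Bset n k V = {t \<in> tuples n k. card (t ` {0..<k} \<inter> V) = 1}"

lemma Bset_lower:
  assumes V: "V \<subseteq> {0..<n}"
  shows "k * card V * (n - card V - k) ^ (k - 1) \<le> card (Bset n k V)"
proof -
  define s where "s = card V"
  define D where "D i = {0..<k} - {i}" for i
  define G where "G i = {g \<in> D i \<rightarrow>\<^sub>E ({0..<n} - V). inj_on g (D i)}" for i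
  define Im where "Im i = (\<lambda>(v,g). g(i:=v)) ` (V \<times> G i)" for i
  have finV: "finite V" using V finite_subset by blast
  have cardC: "card ({0..<n} - V) = n - s" unfolding s_def using V by (simp add: card_Diff_subset finV)
  have cardG: "card (G i) = (\<Prod>j\<in>{0..<k-1}. (n - s) - j)" if "i < k" for i
  proof -
    have "card (D i) = k - 1" unfolding D_def using that by simp
    then show ?thesis unfolding G_def
      using card_inj_on_subset_funcset[of "D i" "{0..<n} - V" "D i"] cardC by (simp add: D_def)
  qed
  have finG: "finite (G i)" for i
    unfolding G_def by (rule finite_subset[of _ "D i \<rightarrow>\<^sub>E ({0..<n} - V)"]) (auto intro!: finite_PiE simp: D_def)
  have inj: "inj_on (\<lambda>(v,g). g(i:=v)) (V \<times> G i)" for i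
  proof (rule inj_onI, clarify)
    fix v g v' g'
    assume g: "g \<in> G i" and g': "g' \<in> G i" and eq: "g(i := v) = g'(i := v')"
    have "v = v'" using fun_cong[OF eq, of i] by simp
    moreover have "g = g'"
    proof
      fix x show "g x = g' x"
      proof (cases "x = i")
        case True
        then have "g x = undefined" "g' x = undefined" using g g' unfolding G_def D_def by auto
        then show ?thesis by simp
      next
        case False then show ?thesis using fun_cong[OF eq, of x] by simp
      qed
    qed
    ultimately show "v = v' \<and> g = g'" by simp
  qed
  have cardIm: "card (Im i) = s * (\<Prod>j\<in>{0..<k-1}. (n - s) - j)" if "i < k" for i
    unfolding Im_def using card_image[OF inj[of i]] cardG[OF that] by (simp add: card_cartesian_product s_def)
  have ImB: "Im i \<subseteq> Bset n k V" if "i < k" for i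
  proof
    fix t assume "t \<in> Im i"
    then obtain v g where v: "v \<in> V" and g: "g \<in> G i" and t: "t = g(i:=v)" unfolding Im_def by auto
    have gD: "\<And>j. j \<in> D i \<Longrightarrow> g j \<in> {0..<n} - V" and gext: "\<And>j. j \<notin> D i \<Longrightarrow> g j = undefined"
      and ginj: "inj_on g (D i)" using g unfolding G_def by auto
    have "t \<in> {0..<k} \<rightarrow>\<^sub>E {0..<n}"
    proof (rule PiE_I)
      fix j assume j: "j \<in> {0..<k}"
      show "t j \<in> {0..<n}"
      proof (cases "j = i")
        case True then show ?thesis using v V unfolding t by auto
      next
        case False then have "j \<in> D i" using j unfolding D_def by auto
        then show ?thesis using gD[of j] False unfolding t by auto
      qed
    next
      fix j assume j: "j \<notin> {0..<k}"
      then have "j \<noteq> i" "j \<notin> D i" using that unfolding D_def by auto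
      then show "t j = undefined" using gext unfolding t by auto
    qed
    moreover have "inj_on t {0..<k}"
    proof -
      have e: "{0..<k} = insert i (D i)" using that unfolding D_def by auto
      have iD: "i \<notin> D i" unfolding D_def by simp
      have "inj_on t (D i) = inj_on g (D i)" by (rule inj_on_cong) (metis iD fun_upd_other t)
      then have 1: "inj_on t (D i)" using ginj by simp
      have "t ` (D i) = g ` (D i)" using iD unfolding t by auto
      then have 2: "t i \<notin> t ` (D i)" using gD v unfolding t by auto
      show ?thesis unfolding e using 1 2 iD by simp
    qed
    moreover have "t ` {0..<k} \<inter> V = {t i}"
    proof -
      have "t ` {0..<k} = insert (t i) (t ` D i)" using that unfolding D_def by auto
      moreover have "t ` D i \<inter> V = {}"
      proof -
        have "t ` D i = g ` D i" unfolding t D_def by auto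
        then show ?thesis using gD by auto
      qed
      ultimately show ?thesis using v t by auto
    qed
    ultimately show "t \<in> Bset n k V" unfolding Bset_def tuples_def by simp
  qed
  have disj: "Im i \<inter> Im j = {}" if "i < k" "j < k" "i \<noteq> j" for i j
  proof -
    { fix t assume "t \<in> Im i" "t \<in> Im j"
      then obtain v g where "v \<in> V" "t = g(i:=v)" using Im_def by auto
      then have "t i \<in> V" by simp
      moreover from \<open>t \<in> Im j\<close> obtain v' g' where "g' \<in> G j" "t = g'(j:=v')" using Im_def by auto
      then have "t i \<notin> V"
      proof -
        assume g': "g' \<in> G j" and tj: "t = g'(j:=v')"
        have "i \<in> D j" using that unfolding D_def by simp
        then have "g' i \<in> {0..<n} - V" using g' unfolding G_def by blast
        moreover have "t i = g' i" using tj that(3) by simp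
        ultimately show ?thesis by simp
      qed
      ultimately have False by simp }
    then show ?thesis by blast
  qed
  have finIm: "finite (Im i)" for i unfolding Im_def using finV finG by auto
  have "card (\<Union>i\<in>{0..<k}. Im i) = (\<Sum>i\<in>{0..<k}. card (Im i))"
    by (rule card_UN_disjoint) (use finIm disj in auto)
  also have "\<dots> = k * (s * (\<Prod>j\<in>{0..<k-1}. (n - s) - j))" using cardIm by simp
  finally have eq: "card (\<Union>i\<in>{0..<k}. Im i) = k * s * (\<Prod>j\<in>{0..<k-1}. (n - s) - j)" by simp
  have "card (\<Union>i\<in>{0..<k}. Im i) \<le> card (Bset n k V)"
  proof (rule card_mono)
    show "finite (Bset n k V)" unfolding Bset_def using tuples_finite by simp
    show "(\<Union>i\<in>{0..<k}. Im i) \<subseteq> Bset n k V" using ImB by (simp add: UN_subset_iff)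
  qed
  moreover have "(n - s - k) ^ (k - 1) \<le> (\<Prod>j\<in>{0..<k-1}. (n - s) - j)"
  proof -
    have "(\<Prod>j\<in>{0..<k-1}. n - s - k) \<le> (\<Prod>j\<in>{0..<k-1}. (n - s) - j)"
      by (rule prod_mono) auto
    then show ?thesis by simp
  qed
  ultimately show ?thesis using eq unfolding s_def[symmetric]
    by (metis (no_types, lifting) le_trans mult_le_mono2)
qed


definition Aset :: "nat \<Rightarrow> nat \<Rightarrow> nat \<Rightarrow> nat set \<Rightarrow> (nat \<Rightarrow> nat) set" where
  "Aset n k d V = {t \<in> tuples n k. card (t ` {0..<k} \<inter> V) \<notin> {1..<d}}"

lemma per_V:
  assumes d: "2 \<le> d" and V: "V \<subseteq> {0..<n}" and kn: "k \<le> n" and n: "0 < n"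
  shows "(real (card (Aset n k d V)) / real (card (tuples n k))) ^ m
     \<le> exp (- (real k * real (card V) * real (n - card V - k) ^ (k - 1) / real n ^ k) * real m)"
proof -
  define a where "a = real (card (Aset n k d V))"
  define b where "b = real (card (Bset n k V))"
  define T where "T = real (card (tuples n k))"
  define x where "x = real k * real (card V) * real (n - card V - k) ^ (k - 1) / real n ^ k"
  have Tpos: "T > 0" unfolding T_def using tuples_card_pos[OF kn] by simp
  have "card (Aset n k d V) + card (Bset n k V) = card (Aset n k d V \<union> Bset n k V)"
    by (rule card_Un_disjoint[symmetric])
       (use tuples_finite d in \<open>auto simp: Aset_def Bset_def\<close>)
  also have "\<dots> \<le> card (tuples n k)"
    by (rule card_mono) (auto simp: tuples_finite Aset_def Bset_def)
  finally have abT: "a + b \<le> T" unfolding a_def b_def T_def by linarith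
  have TN: "T \<le> real n ^ k" unfolding T_def using tuples_card_le[of n k]
    by (metis of_nat_le_iff of_nat_power)
  have bl: "real k * real (card V) * real (n - card V - k) ^ (k - 1) \<le> b"
    unfolding b_def using Bset_lower[OF V, of k]
    by (metis of_nat_le_iff of_nat_mult of_nat_power)
  have x0: "0 \<le> x" unfolding x_def by simp
  have "x \<le> b / T"
  proof -
    have "x \<le> b / real n ^ k" unfolding x_def using bl n by (simp add: divide_right_mono)
    also have "\<dots> \<le> b / T" using Tpos TN b_def by (simp add: frac_le)
    finally show ?thesis .
  qed
  then have "a / T \<le> 1 - x" using abT Tpos by (simp add: field_simps)
  also have "\<dots> \<le> exp (- x)" using exp_ge_add_one_self[of "-x"] by simp
  finally have "(a / T) ^ m \<le> exp (- x) ^ m"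
    by (rule power_mono) (simp add: a_def T_def)
  also have "\<dots> = exp (- x * real m)" by (simp add: exp_of_nat_mult[symmetric] mult.commute)
  finally show ?thesis unfolding a_def T_def x_def .
qed

lemma prob_bound:
  assumes kn: "k \<le> n"
  shows "measure_pmf.prob (random_graph n m k) {G. \<exists>V. small_stopping_set n m k d \<alpha> G V}
    \<le> (\<Sum>V\<in>{V. V \<subseteq> {0..<n} \<and> V \<noteq> {} \<and> real (card V) < \<alpha> * real n}.
          (real (card (Aset n k d V)) / real (card (tuples n k))) ^ m)"
proof -
  define W where "W = {V. V \<subseteq> {0..<n} \<and> V \<noteq> {} \<and> real (card V) < \<alpha> * real n}"
  define E where "E = {G. \<exists>V. small_stopping_set n m k d \<alpha> G V}"
  define S where "S = graphs n m k"
  have finW: "finite W" unfolding W_def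
    by (rule finite_subset[of _ "Pow {0..<n}"]) auto
  have finS: "finite S" unfolding S_def graphs_def using tuples_finite by (intro finite_PiE) auto
  have cardS: "card S = card (tuples n k) ^ m" unfolding S_def graphs_def by (simp add: card_funcsetE)
  have Tpos: "card (tuples n k) > 0" using tuples_card_pos[OF kn] .
  then have "S \<noteq> {}" using cardS finS by (metis card.empty power_not_zero zero_less_iff_neq_zero)
  then have prob: "measure_pmf.prob (random_graph n m k) E = card (S \<inter> E) / card S"
    unfolding random_graph_def S_def by (rule measure_pmf_of_set) (use finS S_def in simp)
  have sub: "S \<inter> E \<subseteq> (\<Union>V\<in>W. {0..<m} \<rightarrow>\<^sub>E Aset n k d V)"
  proof
    fix G assume "G \<in> S \<inter> E"
    then obtain V where G: "G \<in> {0..<m} \<rightarrow>\<^sub>E tuples n k" and ss: "small_stopping_set n m k d \<alpha> G V"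
      unfolding S_def E_def graphs_def by auto
    have VW: "V \<in> W" using ss unfolding W_def small_stopping_set_def stopping_set_def by auto
    have "G \<in> {0..<m} \<rightarrow>\<^sub>E Aset n k d V"
    proof (rule PiE_I)
      fix a assume a: "a \<in> {0..<m}"
      then show "G a \<in> Aset n k d V" using G ss
        unfolding Aset_def small_stopping_set_def stopping_set_def nbrs_def by auto
    next
      fix a assume "a \<notin> {0..<m}" then show "G a = undefined" using G by auto
    qed
    then show "G \<in> (\<Union>V\<in>W. {0..<m} \<rightarrow>\<^sub>E Aset n k d V)" using VW by blast
  qed
  have "card (S \<inter> E) \<le> card (\<Union>V\<in>W. {0..<m} \<rightarrow>\<^sub>E Aset n k d V)"
    by (rule card_mono[OF _ sub]) (use finW tuples_finite in \<open>auto simp: Aset_def intro!: finite_PiE\<close>)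
  also have "\<dots> \<le> (\<Sum>V\<in>W. card ({0..<m} \<rightarrow>\<^sub>E Aset n k d V))" by (rule card_UN_le[OF finW])
  also have "\<dots> = (\<Sum>V\<in>W. card (Aset n k d V) ^ m)" by (simp add: card_funcsetE)
  finally have c: "real (card (S \<inter> E)) \<le> (\<Sum>V\<in>W. real (card (Aset n k d V)) ^ m)"
    by (metis (no_types, lifting) of_nat_le_iff of_nat_power of_nat_sum sum.cong)
  have "measure_pmf.prob (random_graph n m k) E \<le> (\<Sum>V\<in>W. real (card (Aset n k d V)) ^ m) / real (card S)"
    unfolding prob using c by (simp add: divide_right_mono)
  also have "\<dots> = (\<Sum>V\<in>W. (real (card (Aset n k d V)) / real (card (tuples n k))) ^ m)"
    unfolding cardS by (simp add: sum_divide_distrib power_divide)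
  finally show ?thesis unfolding W_def E_def .
qed

lemma sum_pow_card:
  fixes r :: real
  assumes "finite A"
  shows "(\<Sum>V\<in>Pow A. r ^ card V) = (1 + r) ^ card A"
  using assms
proof (induction A rule: finite_induct)
  case empty then show ?case by simp
next
  case (insert a A)
  have disj: "Pow A \<inter> insert a ` Pow A = {}" using insert.hyps by auto
  have inj: "inj_on (insert a) (Pow A)" using insert.hyps by (auto simp: inj_on_def)
  have fin: "finite (Pow A)" "finite (insert a ` Pow A)" using insert.hyps by auto
  have "(\<Sum>V\<in>Pow (insert a A). r ^ card V) = (\<Sum>V\<in>Pow A. r ^ card V) + (\<Sum>V\<in>insert a ` Pow A. r ^ card V)"
    unfolding Pow_insert by (rule sum.union_disjoint[OF fin disj])
  also have "(\<Sum>V\<in>insert a ` Pow A. r ^ card V) = (\<Sum>V\<in>Pow A. r ^ card (insert a V))"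
    by (rule sum.reindex[OF inj, unfolded comp_def])
  also have "\<dots> = (\<Sum>V\<in>Pow A. r * r ^ card V)"
  proof (rule sum.cong[OF refl])
    fix V assume "V \<in> Pow A"
    then have "a \<notin> V" "finite V" using insert.hyps finite_subset by auto
    then show "r ^ card (insert a V) = r * r ^ card V" by simp
  qed
  also have "\<dots> = r * (1 + r) ^ card A" by (metis insert.IH sum_distrib_left)
  finally show ?case using insert.hyps by (simp add: insert.IH algebra_simps)
qed

lemma m_lower:
  assumes "\<mu> > 0" "n \<ge> 1"
  shows "real (nat \<lfloor>\<mu> * real n * ln (real n)\<rfloor>) \<ge> \<mu> * real n * ln (real n) - 1"
proof -
  have "\<mu> * real n * ln (real n) \<ge> 0" using assms by simp
  then show ?thesis by linarith
qed

lemma bound_n: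
  fixes k d n :: nat and \<alpha> \<mu> \<delta> \<kappa> c B :: real
  defines "m \<equiv> nat \<lfloor>\<mu> * real n * ln (real n)\<rfloor>"
  assumes k: "k \<ge> 2" and d: "2 \<le> d" and \<alpha>: "0 < \<alpha>" "\<alpha> < 1" and \<mu>: "\<mu> > 0"
    and \<delta>: "\<delta> > 0" "\<delta> \<le> 1/4"
    and \<kappa>: "\<kappa> = real k * (1 - 2*\<delta>) ^ (k - 1)"
    and c: "c = real k * \<delta> * ((1 - \<alpha>)/2) ^ (k - 1)"
    and n2: "n \<ge> 2" and kn: "k \<le> n" and e2: "real k \<le> \<delta> * real n"
    and e3: "real k \<le> (1 - \<alpha>)/2 * real n"
    and e4: "real n powr (1 - \<kappa> * \<mu>) \<le> 1/2"
    and e5: "exp c * 2 ^ n * exp (- (c * \<mu>) * real n * ln (real n)) \<le> B"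
  shows "measure_pmf.prob (random_graph n m k) {G. \<exists>V. small_stopping_set n m k d \<alpha> G V}
     \<le> exp (real k) * (2 * real n powr (1 - \<kappa> * \<mu>)) + B"
proof -
  define W where "W = {V. V \<subseteq> {0..<n} \<and> V \<noteq> {} \<and> real (card V) < \<alpha> * real n}"
  define WA where "WA = {V\<in>W. real (card V) \<le> \<delta> * real n}"
  define WB where "WB = {V\<in>W. \<not> real (card V) \<le> \<delta> * real n}"
  define f where "f (V::nat set) = (real (card (Aset n k d V)) / real (card (tuples n k))) ^ m" for V
  define x where "x (V::nat set) = real k * real (card V) * real (n - card V - k) ^ (k - 1) / real n ^ k" for V
  define \<rho> where "\<rho> = real n powr (- (\<kappa> * \<mu>))"
  have npos: "real n > 0" using n2 by simp
  have mlow: "real m \<ge> \<mu> * real n * ln (real n) - 1" unfolding m_def using m_lower[OF \<mu>] n2 by simp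
  have lnn: "ln (real n) \<ge> 0" using n2 by simp
  have finW: "finite W" unfolding W_def by (rule finite_subset[of _ "Pow {0..<n}"]) auto
  have WAB: "W = WA \<union> WB" "WA \<inter> WB = {}" unfolding WA_def WB_def by auto
  have finAB: "finite WA" "finite WB" using finW unfolding WA_def WB_def by auto
  have fg: "f V \<le> exp (- x V * real m)" if "V \<in> W" for V
    unfolding f_def x_def by (rule per_V[OF d _ kn]) (use that n2 in \<open>auto simp: W_def\<close>)
  have kk: "k = Suc (k - 1)" using k by simp
  have npow: "real n ^ k = real n * real n ^ (k - 1)" by (subst kk) simp
  have fA: "f V \<le> exp (real k) * \<rho> ^ card V" if V: "V \<in> WA" for V
  proof -
    define s where "s = card V"
    have sdn: "real s \<le> \<delta> * real n" using V unfolding WA_def s_def by auto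
    have "\<delta> * real n \<le> real n / 4" using \<delta> npos by (simp add: mult_right_mono)
    then have "real (s + k) \<le> real n" using sdn e2 by simp
    then have sn: "s + k \<le> n" by (simp only: of_nat_le_iff)
    have R: "real (n - s - k) = real n - real s - real k" using sn by (simp add: of_nat_diff)
    have R2: "real (n - s - k) \<ge> (1 - 2*\<delta>) * real n" unfolding R using sdn e2 by (simp add: algebra_simps)
    have d12: "0 \<le> (1 - 2*\<delta>) * real n" using \<delta> npos by simp
    have "((1 - 2*\<delta>) * real n) ^ (k - 1) \<le> real (n - s - k) ^ (k - 1)"
      by (rule power_mono[OF R2 d12])
    then have "real k * real s * ((1 - 2*\<delta>) * real n) ^ (k - 1) \<le> real k * real s * real (n - s - k) ^ (k - 1)"
      by (simp add: mult_left_mono)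
    then have h: "real s * \<kappa> * real n ^ (k - 1) \<le> real k * real s * real (n - s - k) ^ (k - 1)"
      unfolding \<kappa> by (simp add: power_mult_distrib mult_ac)
    have xl0: "real s * \<kappa> * real n ^ (k - 1) / real n ^ k \<le> x V"
      unfolding x_def s_def[symmetric] by (rule divide_right_mono[OF h]) simp
    have "real s * \<kappa> * real n ^ (k - 1) / real n ^ k = real s * \<kappa> / real n"
      unfolding npow using npos by simp
    then have xl: "real s * \<kappa> / real n \<le> x V" using xl0 by simp
    have \<kappa>k: "\<kappa> \<le> real k" "0 \<le> \<kappa>" unfolding \<kappa> using \<delta>
      by (auto intro!: mult_left_le power_le_one)
    have sn1: "real s \<le> real n" using sn by simp
    have "x V * real m \<ge> (real s * \<kappa> / real n) * (\<mu> * real n * ln (real n) - 1)"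
    proof -
      have "(real s * \<kappa> / real n) * (\<mu> * real n * ln (real n) - 1) \<le> (real s * \<kappa> / real n) * real m"
        using mlow \<kappa>k by (intro mult_left_mono) auto
      also have "\<dots> \<le> x V * real m" using xl by (intro mult_right_mono) auto
      finally show ?thesis .
    qed
    moreover have "(real s * \<kappa> / real n) * (\<mu> * real n * ln (real n) - 1)
        = real s * (\<kappa> * \<mu> * ln (real n)) - real s * \<kappa> / real n"
      using npos by (simp add: field_simps)
    moreover have "real s * \<kappa> / real n \<le> real k"
    proof -
      have "real s * \<kappa> \<le> real n * real k" using sn1 \<kappa>k by (intro mult_mono) auto
      then show ?thesis using npos by (simp add: field_simps)
    qed
    moreover have "real s * (- (\<kappa> * \<mu>) * ln (real n)) = - (real s * (\<kappa> * \<mu> * ln (real n)))" by simp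
    ultimately have xm: "- x V * real m \<le> real k + real s * (- (\<kappa> * \<mu>) * ln (real n))" by linarith
    have "exp (- x V * real m) \<le> exp (real k + real s * (- (\<kappa> * \<mu>) * ln (real n)))"
      using xm by simp
    also have "\<dots> = exp (real k) * \<rho> ^ s"
    proof -
      have "\<rho> = exp (- (\<kappa> * \<mu>) * ln (real n))" unfolding \<rho>_def powr_def using npos by simp
      then have "\<rho> ^ s = exp (real s * (- (\<kappa> * \<mu>) * ln (real n)))" by (simp only: exp_of_nat_mult)
      then show ?thesis by (simp add: exp_diff exp_minus divide_inverse)
    qed
    finally show ?thesis using fg[of V] V unfolding WA_def s_def by auto
  qed
  have \<rho>0: "\<rho> \<ge> 0" unfolding \<rho>_def by simp
  have sumA: "(\<Sum>V\<in>WA. f V) \<le> exp (real k) * ((1 + \<rho>) ^ n - 1)"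
  proof -
    have "(\<Sum>V\<in>WA. f V) \<le> (\<Sum>V\<in>WA. exp (real k) * \<rho> ^ card V)" by (rule sum_mono[OF fA])
    also have "\<dots> \<le> (\<Sum>V\<in>Pow {0..<n} - {{}}. exp (real k) * \<rho> ^ card V)"
      by (rule sum_mono2) (use \<rho>0 in \<open>auto simp: WA_def W_def\<close>)
    also have "\<dots> = exp (real k) * ((\<Sum>V\<in>Pow {0..<n}. \<rho> ^ card V) - 1)"
      by (simp add: sum_distrib_left[symmetric] sum_diff1)
    also have "\<dots> = exp (real k) * ((1 + \<rho>) ^ n - 1)" using sum_pow_card[of "{0..<n}" \<rho>] by simp
    finally show ?thesis .
  qed
  have n\<rho>: "real n * \<rho> = real n powr (1 - \<kappa> * \<mu>)"
  proof -
    have "real n powr (1 - \<kappa> * \<mu>) = real n powr 1 * real n powr (- (\<kappa> * \<mu>))"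
      using powr_add[of "real n" 1 "- (\<kappa> * \<mu>)"] by simp
    then show ?thesis unfolding \<rho>_def using npos by simp
  qed
  have "(1 + \<rho>) ^ n \<le> exp \<rho> ^ n" using \<rho>0 by (intro power_mono) (auto simp: add.commute)
  also have "\<dots> = exp (real n * \<rho>)" by (simp add: exp_of_nat_mult)
  also have "\<dots> \<le> 1 + 2 * (real n * \<rho>)"
    using exp_bound_lemma[of "real n * \<rho>"] e4 n\<rho> \<rho>0 npos by simp
  finally have expb: "(1 + \<rho>) ^ n \<le> 1 + 2 * (real n * \<rho>)" .
  have sumA': "(\<Sum>V\<in>WA. f V) \<le> exp (real k) * (2 * real n powr (1 - \<kappa> * \<mu>))"
  proof -
    have "(1 + \<rho>) ^ n - 1 \<le> 2 * real n powr (1 - \<kappa> * \<mu>)" using expb n\<rho> by linarith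
    then have "exp (real k) * ((1 + \<rho>) ^ n - 1) \<le> exp (real k) * (2 * real n powr (1 - \<kappa> * \<mu>))"
      by (rule mult_left_mono) simp
    then show ?thesis using sumA by linarith
  qed
  have c0: "c \<ge> 0" unfolding c using \<delta> \<alpha> by simp
  have fB: "f V \<le> exp c * exp (- (c * \<mu>) * real n * ln (real n))" if V: "V \<in> WB" for V
  proof -
    define s where "s = card V"
    have sdn: "real s > \<delta> * real n" "real s < \<alpha> * real n" using V unfolding WB_def W_def s_def by auto
    have "\<alpha> * real n \<le> real n" using \<alpha> npos by (simp add: mult_right_mono)
    moreover have aeq: "(1 - \<alpha>)/2 * real n = real n / 2 - \<alpha> * real n / 2" by (simp add: field_simps)
    ultimately have "real s + real k \<le> real n" using sdn e3 by linarith
    then have "real (s + k) \<le> real n" by simp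
    then have sn: "s + k \<le> n" by (simp only: of_nat_le_iff)
    have R: "real (n - s - k) = real n - real s - real k" using sn by (simp add: of_nat_diff)
    have R2: "real (n - s - k) \<ge> (1 - \<alpha>)/2 * real n" unfolding R using sdn e3 aeq by linarith
    have d12: "0 \<le> (1 - \<alpha>)/2 * real n" using \<alpha> npos by simp
    have p1: "((1 - \<alpha>)/2 * real n) ^ (k - 1) \<le> real (n - s - k) ^ (k - 1)"
      by (rule power_mono[OF R2 d12])
    have "real k * (\<delta> * real n) * ((1 - \<alpha>)/2 * real n) ^ (k - 1) \<le> real k * real s * real (n - s - k) ^ (k - 1)"
      using p1 sdn \<delta> npos d12 by (intro mult_mono mult_left_mono) auto
    moreover have pe: "((1 - \<alpha>)/2 * real n) ^ (k - 1) = ((1 - \<alpha>)/2) ^ (k - 1) * real n ^ (k - 1)"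
      by (simp only: power_mult_distrib)
    ultimately have h: "c * real n ^ k \<le> real k * real s * real (n - s - k) ^ (k - 1)"
      unfolding c npow pe by (simp only: mult_ac)
    have "c * real n ^ k / real n ^ k \<le> x V"
      unfolding x_def s_def[symmetric] by (rule divide_right_mono[OF h]) simp
    then have xl: "c \<le> x V" using npos by simp
    have "c * (\<mu> * real n * ln (real n) - 1) \<le> c * real m" using mlow c0 by (intro mult_left_mono) auto
    also have "\<dots> \<le> x V * real m" using xl by (intro mult_right_mono) auto
    finally have "- x V * real m \<le> c + (- (c * \<mu>) * real n * ln (real n))" by (simp add: algebra_simps)
    then have "exp (- x V * real m) \<le> exp (c + (- (c * \<mu>) * real n * ln (real n)))" by simp
    also have "\<dots> = exp c * exp (- (c * \<mu>) * real n * ln (real n))" by (rule exp_add)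
    finally have "exp (- x V * real m) \<le> exp c * exp (- (c * \<mu>) * real n * ln (real n))" .
    moreover have "f V \<le> exp (- x V * real m)" using fg[of V] V unfolding WB_def by auto
    ultimately show ?thesis by linarith
  qed
  have sumB: "(\<Sum>V\<in>WB. f V) \<le> B"
  proof -
    have "(\<Sum>V\<in>WB. f V) \<le> (\<Sum>V\<in>WB. exp c * exp (- (c * \<mu>) * real n * ln (real n)))" by (rule sum_mono[OF fB])
    also have "\<dots> = real (card WB) * (exp c * exp (- (c * \<mu>) * real n * ln (real n)))" by simp
    also have "\<dots> \<le> 2 ^ n * (exp c * exp (- (c * \<mu>) * real n * ln (real n)))"
    proof (rule mult_right_mono)
      have "card WB \<le> card (Pow {0..<n})" by (rule card_mono) (auto simp: WB_def W_def)
      then have "card WB \<le> 2 ^ n" by (simp add: card_Pow)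
      then show "real (card WB) \<le> 2 ^ n" by (metis of_nat_le_iff of_nat_numeral of_nat_power)
    qed simp
    also have "\<dots> \<le> B" using e5 by (simp add: mult_ac)
    finally show ?thesis .
  qed
  have "measure_pmf.prob (random_graph n m k) {G. \<exists>V. small_stopping_set n m k d \<alpha> G V} \<le> (\<Sum>V\<in>W. f V)"
    using prob_bound[OF kn, of m d \<alpha>] unfolding f_def W_def .
  also have "\<dots> = (\<Sum>V\<in>WA. f V) + (\<Sum>V\<in>WB. f V)" unfolding WAB(1) by (rule sum.union_disjoint[OF finAB WAB(2)])
  finally show ?thesis using sumA' sumB by linarith
qed


lemma ev_lin: "(a::real) > 0 \<Longrightarrow> eventually (\<lambda>n::nat. C \<le> a * real n) at_top"
  by real_asymp

lemma ev_pow: "(a::real) < 0 \<Longrightarrow> eventually (\<lambda>n::nat. real n powr a \<le> 1/2) at_top"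
  by real_asymp

lemma ev_big: "(b::real) > 0 \<Longrightarrow> g > 0 \<Longrightarrow> C > 0 \<Longrightarrow>
  eventually (\<lambda>n::nat. C * 2 ^ n * exp (- b * real n * ln (real n)) \<le> real n powr (- g)) at_top"
  by real_asymp

theorem mainTheorem3:
  fixes k d :: nat and \<alpha> \<mu> \<epsilon> :: real
  assumes "k \<ge> 2" and "2 \<le> d" and "d \<le> k"
    and "0 < \<alpha>" and "\<alpha> < 1"
    and "\<mu> > 1 / real k"
    and "0 < \<epsilon>" and "\<epsilon> < \<mu> * real k - 1"
  shows "(\<lambda>n. measure_pmf.prob (random_graph n (nat \<lfloor>\<mu> * real n * ln (real n)\<rfloor>) k)
             {G. \<exists>V. small_stopping_set n (nat \<lfloor>\<mu> * real n * ln (real n)\<rfloor>) k d \<alpha> G V})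
         \<in> O(\<lambda>n. real n powr (1 - \<mu> * real k + \<epsilon>))"
proof -
  note k = assms(1) and d = assms(2) and \<alpha> = assms(4,5) and \<epsilon> = assms(7,8)
  define K where "K = real k"
  have K2: "K \<ge> 2" unfolding K_def using k by simp
  have \<mu>0: "\<mu> > 0" using assms(6) K2 unfolding K_def by (smt (verit) divide_pos_pos)
  have \<mu>K: "\<mu> * K > 1" using assms(6) K2 unfolding K_def by (simp add: field_simps)
  define \<delta> where "\<delta> = \<epsilon> / (2 * \<mu> * K * K)"
  define \<kappa> where "\<kappa> = real k * (1 - 2*\<delta>) ^ (k - 1)"
  define c where "c = real k * \<delta> * ((1 - \<alpha>)/2) ^ (k - 1)"
  define \<gamma> where "\<gamma> = 1 - \<mu> * real k + \<epsilon>"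
  have \<gamma>0: "\<gamma> < 0" unfolding \<gamma>_def using \<epsilon> by simp
  have \<delta>0: "\<delta> > 0" unfolding \<delta>_def using \<epsilon> \<mu>0 K2 by simp
  have \<delta>1: "\<delta> \<le> 1/4"
  proof -
    have "\<epsilon> \<le> \<mu> * K" using \<epsilon> unfolding K_def by simp
    then have "\<delta> \<le> \<mu> * K / (2 * \<mu> * K * K)" unfolding \<delta>_def using \<mu>0 K2
      by (intro divide_right_mono) auto
    also have "\<dots> = 1 / (2 * K)" using \<mu>0 K2 by (simp add: field_simps)
    also have "\<dots> \<le> 1/4" using K2 by (simp add: field_simps)
    finally show ?thesis .
  qed
  have \<kappa>\<mu>: "1 - \<kappa> * \<mu> \<le> \<gamma>"
  proof -
    have "1 + real (k - 1) * (- 2 * \<delta>) \<le> (1 + (- 2 * \<delta>)) ^ (k - 1)"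
      by (rule Bernoulli_inequality) (use \<delta>1 in simp)
    then have B: "1 - 2 * \<delta> * (K - 1) \<le> (1 - 2 * \<delta>) ^ (k - 1)"
      unfolding K_def using k by (simp add: of_nat_diff algebra_simps)
    have "\<mu> * K * (1 - 2 * \<delta> * (K - 1)) \<le> \<mu> * K * (1 - 2 * \<delta>) ^ (k - 1)"
      using B \<mu>0 K2 by (intro mult_left_mono) auto
    moreover have "\<mu> * K * (1 - 2 * \<delta> * (K - 1)) = \<mu> * K - \<epsilon> * (K - 1) / K"
      unfolding \<delta>_def using \<mu>0 K2 by (simp add: field_simps)
    moreover have "\<epsilon> * (K - 1) / K \<le> \<epsilon>" using \<epsilon> K2 by (simp add: field_simps)
    moreover have "\<kappa> * \<mu> = \<mu> * K * (1 - 2 * \<delta>) ^ (k - 1)" unfolding \<kappa>_def K_def by simp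
    ultimately show ?thesis unfolding \<gamma>_def K_def by linarith
  qed
  have c0: "c > 0" unfolding c_def using \<delta>0 \<alpha> k by simp
  have ev: "eventually (\<lambda>n::nat. n \<ge> 2 \<and> k \<le> n \<and> real k \<le> \<delta> * real n
      \<and> real k \<le> (1 - \<alpha>)/2 * real n \<and> real n powr (1 - \<kappa> * \<mu>) \<le> 1/2
      \<and> exp c * 2 ^ n * exp (- (c * \<mu>) * real n * ln (real n)) \<le> real n powr \<gamma>) at_top"
  proof (intro eventually_conj)
    show "eventually (\<lambda>n::nat. n \<ge> 2) at_top" by (rule eventually_ge_at_top)
    show "eventually (\<lambda>n::nat. k \<le> n) at_top" by (rule eventually_ge_at_top)
    show "eventually (\<lambda>n::nat. real k \<le> \<delta> * real n) at_top" by (rule ev_lin[OF \<delta>0])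
    show "eventually (\<lambda>n::nat. real k \<le> (1 - \<alpha>)/2 * real n) at_top" by (rule ev_lin) (use \<alpha> in simp)
    show "eventually (\<lambda>n::nat. real n powr (1 - \<kappa> * \<mu>) \<le> 1/2) at_top" by (rule ev_pow) (use \<kappa>\<mu> \<gamma>0 in simp)
    have "eventually (\<lambda>n::nat. exp c * 2 ^ n * exp (- (c * \<mu>) * real n * ln (real n)) \<le> real n powr (- (- \<gamma>))) at_top"
      by (rule ev_big) (use c0 \<mu>0 \<gamma>0 in auto)
    then show "eventually (\<lambda>n::nat. exp c * 2 ^ n * exp (- (c * \<mu>) * real n * ln (real n)) \<le> real n powr \<gamma>) at_top"
      by simp
  qed
  have "eventually (\<lambda>n::nat. norm (measure_pmf.prob (random_graph n (nat \<lfloor>\<mu> * real n * ln (real n)\<rfloor>) k)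
             {G. \<exists>V. small_stopping_set n (nat \<lfloor>\<mu> * real n * ln (real n)\<rfloor>) k d \<alpha> G V})
         \<le> (2 * exp (real k) + 1) * norm (real n powr \<gamma>)) at_top"
    using ev
  proof eventually_elim
    case (elim n)
    then have n2: "n \<ge> 2" and kn: "k \<le> n" and e2: "real k \<le> \<delta> * real n"
      and e3: "real k \<le> (1 - \<alpha>)/2 * real n" and e4: "real n powr (1 - \<kappa> * \<mu>) \<le> 1/2"
      and e5: "exp c * 2 ^ n * exp (- (c * \<mu>) * real n * ln (real n)) \<le> real n powr \<gamma>" by auto
    have b: "measure_pmf.prob (random_graph n (nat \<lfloor>\<mu> * real n * ln (real n)\<rfloor>) k)
             {G. \<exists>V. small_stopping_set n (nat \<lfloor>\<mu> * real n * ln (real n)\<rfloor>) k d \<alpha> G V}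
      \<le> exp (real k) * (2 * real n powr (1 - \<kappa> * \<mu>)) + real n powr \<gamma>"
      by (rule bound_n[OF k d \<alpha> \<mu>0 \<delta>0 \<delta>1 \<kappa>_def c_def n2 kn e2 e3 e4 e5])
    have "real n powr (1 - \<kappa> * \<mu>) \<le> real n powr \<gamma>" by (rule powr_mono[OF \<kappa>\<mu>]) (use n2 in simp)
    then have m2: "exp (real k) * (2 * real n powr (1 - \<kappa> * \<mu>)) \<le> exp (real k) * (2 * real n powr \<gamma>)"
      by simp
    have "measure_pmf.prob (random_graph n (nat \<lfloor>\<mu> * real n * ln (real n)\<rfloor>) k)
             {G. \<exists>V. small_stopping_set n (nat \<lfloor>\<mu> * real n * ln (real n)\<rfloor>) k d \<alpha> G V}
      \<le> exp (real k) * (2 * real n powr \<gamma>) + real n powr \<gamma>" using b m2 by linarith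
    moreover have "exp (real k) * (2 * real n powr \<gamma>) + real n powr \<gamma> = (2 * exp (real k) + 1) * real n powr \<gamma>"
      by (simp add: algebra_simps)
    ultimately show ?case by (simp add: measure_nonneg)
  qed
  then show ?thesis unfolding \<gamma>_def by (rule bigoI)
qed

end
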